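(* Let $D(a_0,a_1,a_2;p)=\sum_{k=0}^2\binom{2}{k}p^k(1-p)^{2-k}|p-a_k|$, let $(a_0,a_1,a_2)\in[0,1]^3$ minimize $\max_{p\in[0,1]}D(x_0,x_1,x_2;p)$ over $[0,1]^3$, and let $f(p)=D(a_0,a_1,a_2;p)$. Then $f(0)=f(1)=\|f\|_\infty$, i.e. $\{0,1\}\subset M(f)=\{x\in[0,1]:f(x)=\|f\|_\infty\}$. *)

theory Defs
  imports "HOL-Analysis.Analysis"
begin

definition D :: "real \<Rightarrow> real \<Rightarrow> real \<Rightarrow> real \<Rightarrow> real" where
  "D a0 a1 a2 p = (\<Sum>k\<le>2. real (2 choose k) * p ^ k * (1 - p) ^ (2 - k) *
                     \<bar>p - (if k = 0 then a0 else if k = 1 then a1 else a2)\<bar>)"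

definition supnorm01 :: "(real \<Rightarrow> real) \<Rightarrow> real" where
  "supnorm01 f = (SUP p\<in>{0..1}. \<bar>f p\<bar>)"

definition maxset01 :: "(real \<Rightarrow> real) \<Rightarrow> real set" where
  "maxset01 f = {x \<in> {0..1}. f x = supnorm01 f}"

end

theory Submission
  imports Defs
begin
lemma D_expand: "D x0 x1 x2 p = (1-p)^2*\<bar>p-x0\<bar> + 2*p*(1-p)*\<bar>p-x1\<bar> + p^2*\<bar>p-x2\<bar>"
  by (simp add: D_def eval_nat_numeral atMost_Suc)
lemma D_sym: "D x0 x1 x2 p = D (1-x2) (1-x1) (1-x0) (1-p)"
  unfolding D_expand by (simp add: abs_minus_commute algebra_simps)
lemma D_cont: "continuous_on S (D x0 x1 x2)"
  unfolding D_def by (intro continuous_intros)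
lemma D_nonneg: "0 \<le> p \<Longrightarrow> p \<le> 1 \<Longrightarrow> 0 \<le> D x0 x1 x2 p"
  unfolding D_expand by (intro add_nonneg_nonneg mult_nonneg_nonneg) auto
lemma half: assumes "0 \<le> p" "p \<le> 1/2" "0 \<le> M" "M \<le> 1/2" "p*(1-p)^2 \<le> M*(1-p+p^2)"
  shows "D M (1/2) (1-M) p \<le> M"
proof (cases "p \<le> M")
  case True
  then have "D M (1/2) (1-M) p = M - 2*M*p" unfolding D_expand using assms
    by (simp add: abs_if power2_eq_square algebra_simps)
  then show ?thesis using assms by (simp add: mult_nonneg_nonneg)
next
  case False
  then have "D M (1/2) (1-M) p = M + 2*(p*(1-p)^2 - M*(1-p+p^2))" unfolding D_expand using assms
    by (simp add: abs_if power2_eq_square algebra_simps)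
  then show ?thesis using assms by simp
qed
lemma dual: assumes "0 \<le> q" "q \<le> 1/2"
  shows "((1-q)^2+q^2) * D x0 x1 x2 0 + D x0 x1 x2 q + D x0 x1 x2 (1-q) + ((1-q)^2+q^2) * D x0 x1 x2 1
     \<ge> 4*q*(1-q)^2"
proof -
  have a: "(1-q)^2*(\<bar>x0\<bar>+\<bar>q-x0\<bar>) \<ge> (1-q)^2 * q" using assms
    by (intro mult_left_mono) auto
  have b: "q^2*(\<bar>x0\<bar>+\<bar>1-q-x0\<bar>) \<ge> q^2 * (1-q)" using assms
    by (intro mult_left_mono) auto
  have c: "2*q*(1-q)*(\<bar>q-x1\<bar>+\<bar>1-q-x1\<bar>) \<ge> 2*q*(1-q)*(1-2*q)" using assms
    by (intro mult_left_mono) auto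
  have d: "(1-q)^2*(\<bar>1-x2\<bar>+\<bar>1-q-x2\<bar>) \<ge> (1-q)^2 * q" using assms
    by (intro mult_left_mono) auto
  have e: "q^2*(\<bar>1-x2\<bar>+\<bar>q-x2\<bar>) \<ge> q^2 * (1-q)" using assms
    by (intro mult_left_mono) auto
  show ?thesis unfolding D_expand using a b c d e
    by (simp add: algebra_simps power2_eq_square abs_minus_commute) 
qed
definition L :: "real \<Rightarrow> real" where "L p = p*(1-p)^2/(1-p+p^2)"

lemma denom_pos: "0 < 1 - p + (p::real)^2"
proof -
  have "1 - p + p^2 = (p-1/2)^2 + 3/4" by (simp add: power2_eq_square algebra_simps)
  moreover have "(p-1/2)^2 \<ge> 0" by simp
  ultimately show ?thesis by linarith
qed

lemma SUP_bdd: "bdd_above (D x0 x1 x2 ` {0..1})"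
  by (intro bounded_imp_bdd_above compact_imp_bounded compact_continuous_image D_cont compact_Icc)

theorem lemma5p4:
  fixes a0 a1 a2 :: real
  assumes "a0 \<in> {0..1}" "a1 \<in> {0..1}" "a2 \<in> {0..1}"
    and "\<And>x0 x1 x2. x0 \<in> {0..1} \<Longrightarrow> x1 \<in> {0..1} \<Longrightarrow> x2 \<in> {0..1} \<Longrightarrow>
           (SUP p\<in>{0..1}. D a0 a1 a2 p) \<le> (SUP p\<in>{0..1}. D x0 x1 x2 p)"
  shows "D a0 a1 a2 0 = supnorm01 (D a0 a1 a2) \<and> D a0 a1 a2 1 = supnorm01 (D a0 a1 a2)
         \<and> {0, 1} \<subseteq> maxset01 (D a0 a1 a2)"
proof -
  have contL: "continuous_on {0..1/2} L"
    unfolding L_def using denom_pos by (intro continuous_intros) (metis less_irrefl denom_pos)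
  obtain q where q: "q \<in> {0..1/2}" and qmax: "\<And>p. p \<in> {0..1/2} \<Longrightarrow> L p \<le> L q"
    using continuous_attains_sup[OF compact_Icc _ contL] by auto
  define M where "M = L q"
  have "L (1/3) = 4/21" by (simp add: L_def power2_eq_square)
  then have M_ge: "M \<ge> 4/21" using qmax[of "1/3"] by (simp add: M_def)
  have Mdef': "M * (1 - q + q^2) = q*(1-q)^2"
    unfolding M_def L_def using denom_pos[of q] by simp
  have M_le: "M \<le> 1/2"
  proof -
    have "q*(1-q)^2 \<le> 1/2*(1-q+q^2)" 
    proof -
      have "q*(1-q)^2 \<le> q*(1-q)" using q by (auto intro!: mult_left_mono simp: power2_eq_square)
      moreover have "q*(1-q) \<le> 1/4" using zero_le_power2[of "q-1/2"] by (simp add: power2_eq_square algebra_simps)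
      moreover have "1 - q + q^2 \<ge> 3/4" using zero_le_power2[of "q-1/2"] by (simp add: power2_eq_square algebra_simps)
      then have "1/2*(1 - q + q^2) \<ge> 3/8" by simp
      ultimately show ?thesis by linarith
    qed
    then show ?thesis using Mdef' denom_pos[of q]
      by (metis mult_le_cancel_right_pos)
  qed
  have Lle: "p*(1-p)^2 \<le> M*(1-p+p^2)" if "p \<in> {0..1/2}" for p
  proof -
    have "L p \<le> M" using qmax[OF that] M_def by simp
    then show ?thesis unfolding L_def using denom_pos[of p] by (simp add: divide_le_eq)
  qed
  have bpt: "D M (1/2) (1-M) p \<le> M" if "p \<in> {0..1}" for p
  proof (cases "p \<le> 1/2")
    case True
    then show ?thesis using that M_ge M_le Lle[of p] by (intro half) auto
  next
    case False
    have "D M (1/2) (1-M) p = D M (1/2) (1-M) (1-p)" using D_sym[of M "1/2" "1-M" p] by simp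
    also have "\<dots> \<le> M" using that False M_ge M_le Lle[of "1-p"] by (intro half) auto
    finally show ?thesis .
  qed
  have Phib: "(SUP p\<in>{0..1}. D M (1/2) (1-M) p) \<le> M"
    by (rule cSUP_least) (auto intro: bpt)
  have Phia: "(SUP p\<in>{0..1}. D a0 a1 a2 p) \<le> M"
    using assms(4)[of M "1/2" "1-M"] M_ge M_le Phib by auto
  have le: "D a0 a1 a2 p \<le> M" if "p \<in> {0..1}" for p
    using cSUP_upper[OF that SUP_bdd[of a0 a1 a2]] Phia by linarith
  have d: "((1-q)^2+q^2) * D a0 a1 a2 0 + D a0 a1 a2 q + D a0 a1 a2 (1-q) + ((1-q)^2+q^2) * D a0 a1 a2 1
     \<ge> 4*q*(1-q)^2" using dual q by auto
  have W: "(1-q)^2+q^2 > 0" 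
  proof -
    have "(1-q)^2 > 0" using q by simp
    then show ?thesis using zero_le_power2[of q] by linarith
  qed
  have l0: "D a0 a1 a2 0 \<le> M" and l1: "D a0 a1 a2 1 \<le> M" and lq: "D a0 a1 a2 q \<le> M"
    and lq': "D a0 a1 a2 (1-q) \<le> M" using le q by auto
  have sumM: "(2*((1-q)^2+q^2) + 2) * M = 4*q*(1-q)^2" using Mdef' by (simp add: algebra_simps power2_eq_square)
  have e0: "D a0 a1 a2 0 = M"
  proof (rule ccontr)
    assume "D a0 a1 a2 0 \<noteq> M"
    then have "D a0 a1 a2 0 < M" using l0 by auto
    then have "((1-q)^2+q^2) * D a0 a1 a2 0 < ((1-q)^2+q^2) * M" using W by simp
    moreover have "((1-q)^2+q^2) * D a0 a1 a2 1 \<le> ((1-q)^2+q^2) * M" using W l1 by simp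
    ultimately show False using d lq lq' sumM by (simp add: algebra_simps)
  qed
  have e1: "D a0 a1 a2 1 = M"
  proof (rule ccontr)
    assume "D a0 a1 a2 1 \<noteq> M"
    then have "D a0 a1 a2 1 < M" using l1 by auto
    then have "((1-q)^2+q^2) * D a0 a1 a2 1 < ((1-q)^2+q^2) * M" using W by simp
    moreover have "((1-q)^2+q^2) * D a0 a1 a2 0 \<le> ((1-q)^2+q^2) * M" using W l0 by simp
    ultimately show False using d lq lq' sumM by (simp add: algebra_simps)
  qed
  have sn: "supnorm01 (D a0 a1 a2) = M"
  proof -
    have "supnorm01 (D a0 a1 a2) = (SUP p\<in>{0..1}. D a0 a1 a2 p)"
      unfolding supnorm01_def by (intro SUP_cong refl) (auto simp: D_nonneg)
    also have "\<dots> = M"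
    proof (rule antisym[OF Phia])
      show "M \<le> (SUP p\<in>{0..1}. D a0 a1 a2 p)"
        using cSUP_upper[of 0 "{0..1}" "D a0 a1 a2", OF _ SUP_bdd] e0 by simp
    qed
    finally show ?thesis .
  qed
  show ?thesis using e0 e1 sn by (auto simp: maxset01_def)
qed

end
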